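(* Let $S$ be a monoid with $1\in E\subseteq E(S)$, and let $\cdot:S\times E\to E$ be a function. Then $S$ is a modal left $E$-monoid with left $E$-modal operation $\cdot$ if and only if $E$ is right pre-reduced and for all $e\in E$ and $s,t\in S$: (M1) $e\cdot e=1$; (M2) $s\cdot 1=1$; (M3) $(s\cdot e)s=(s\cdot e)se$; (M4) $(st)\cdot e=s\cdot(t\cdot e)$. Furthermore, $S$ is an inductive left $E$-monoid with associated operation $\cdot$ if and only if (M1)–(M4) hold, $(E,\le_r)$ is a meet-semilattice, and (M5) $s\cdot(e\wedge f)=(s\cdot e)\wedge(s\cdot f)$ for all $s\in S$, $e,f\in E$, where $\wedge$ is the meet in $(E,\le_r)$.
   Context: For a semigroup $S$, $E(S)$ is its set of idempotents; for $e,f\in E(S)$, $e\le_r f$ iff $e=ef$. $E\subseteq E(S)$ is right pre-reduced if $e=ef$ and $f=fe$ imply $e=f$ for $e,f\in E$. Let $S$ be a monoid and $1\in E\subseteq E(S)$. $S$ is a modal left $E$-monoid if $E$ is right pre-reduced and (I1') for all $t\in S$, $e\in E$ there is $t\cdot e\in E$ such that for all $s\in S$: $ste=st$ iff $s(t\cdot e)=s$; the (necessarily unique) resulting map $(t,e)\mapsto t\cdot e$ is the left $E$-modal operation. $S$ is an inductive left $E$-monoid if it is a modal left $E$-monoid, $(E,\le_r)$ is a meet-semilattice with meet $\wedge$, and (I2') for $s\in S$, $e,f\in E$: $se=sf=s$ implies $s(e\wedge f)=s$. *)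

theory Defs
  imports Main
begin

text \<open>The monoid S is modelled as a type of class monoid_mult; E is a subset of it.
  The operation (t,e) maps to t . e is a function dot :: S => S => S, required to map S x E into E;
  its values outside S x E are irrelevant.\<close>

definition idempotents :: "'a::monoid_mult set" where
  "idempotents = {e. e * e = e}"

definition le_r :: "'a::monoid_mult \<Rightarrow> 'a \<Rightarrow> bool" where
  "le_r e f \<longleftrightarrow> e = e * f"

definition right_pre_reduced :: "'a::monoid_mult set \<Rightarrow> bool" where
  "right_pre_reduced E \<longleftrightarrow> (\<forall>e\<in>E. \<forall>f\<in>E. e = e * f \<and> f = f * e \<longrightarrow> e = f)"

definition modal_left_monoid :: "'a::monoid_mult set \<Rightarrow> ('a \<Rightarrow> 'a \<Rightarrow> 'a) \<Rightarrow> bool" where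
  "modal_left_monoid E dot \<longleftrightarrow>
     1 \<in> E \<and> E \<subseteq> idempotents \<and> right_pre_reduced E \<and>
     (\<forall>t. \<forall>e\<in>E. dot t e \<in> E \<and> (\<forall>s. s * t * e = s * t \<longleftrightarrow> s * dot t e = s))"

definition is_meet :: "'a::monoid_mult set \<Rightarrow> 'a \<Rightarrow> 'a \<Rightarrow> 'a \<Rightarrow> bool" where
  "is_meet E e f g \<longleftrightarrow> g \<in> E \<and> le_r g e \<and> le_r g f \<and>
     (\<forall>h\<in>E. le_r h e \<and> le_r h f \<longrightarrow> le_r h g)"

definition meet_semilattice :: "'a::monoid_mult set \<Rightarrow> bool" where
  "meet_semilattice E \<longleftrightarrow>
     (\<forall>e\<in>E. le_r e e) \<and>
     (\<forall>e\<in>E. \<forall>f\<in>E. \<forall>g\<in>E. le_r e f \<and> le_r f g \<longrightarrow> le_r e g) \<and>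
     (\<forall>e\<in>E. \<forall>f\<in>E. le_r e f \<and> le_r f e \<longrightarrow> e = f) \<and>
     (\<forall>e\<in>E. \<forall>f\<in>E. \<exists>g. is_meet E e f g)"

definition meet :: "'a::monoid_mult set \<Rightarrow> 'a \<Rightarrow> 'a \<Rightarrow> 'a" where
  "meet E e f = (THE g. is_meet E e f g)"

definition inductive_left_monoid :: "'a::monoid_mult set \<Rightarrow> ('a \<Rightarrow> 'a \<Rightarrow> 'a) \<Rightarrow> bool" where
  "inductive_left_monoid E dot \<longleftrightarrow>
     modal_left_monoid E dot \<and> meet_semilattice E \<and>
     (\<forall>s. \<forall>e\<in>E. \<forall>f\<in>E. s * e = s \<and> s * f = s \<longrightarrow> s * meet E e f = s)"

end

theory Submission
  imports Defs
begin

lemma idem: "E \<subseteq> idempotents \<Longrightarrow> e \<in> E \<Longrightarrow> e * e = e"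
  unfolding idempotents_def by auto

lemma modal_iff:
  fixes E :: "'a::monoid_mult set" and dot :: "'a \<Rightarrow> 'a \<Rightarrow> 'a"
  assumes E1: "1 \<in> E" and EI: "E \<subseteq> idempotents"
    and cl: "\<forall>t. \<forall>e\<in>E. dot t e \<in> E"
  shows "modal_left_monoid E dot \<longleftrightarrow>
           right_pre_reduced E \<and>
           (\<forall>e\<in>E. dot e e = 1) \<and>
           (\<forall>s. dot s 1 = 1) \<and>
           (\<forall>e\<in>E. \<forall>s. dot s e * s = dot s e * s * e) \<and>
           (\<forall>e\<in>E. \<forall>s t. dot (s * t) e = dot s (dot t e))"
proof
  assume m: "modal_left_monoid E dot"
  then have rp: "right_pre_reduced E"
    and I: "\<And>t e s. e \<in> E \<Longrightarrow> s * t * e = s * t \<longleftrightarrow> s * dot t e = s"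
    unfolding modal_left_monoid_def by auto
  have M1: "\<forall>e\<in>E. dot e e = 1"
  proof
    fix e assume e: "e \<in> E"
    have "1 * e * e = 1 * e" using idem[OF EI e] by (simp add: mult.assoc)
    then show "dot e e = 1" using I[OF e, of 1 e] by simp
  qed
  have M2: "\<forall>s. dot s 1 = 1"
    using I[OF E1, of 1] by simp
  have M3: "\<forall>e\<in>E. \<forall>s. dot s e * s = dot s e * s * e"
  proof (intro ballI allI)
    fix e s assume e: "e \<in> E"
    have "dot s e * dot s e = dot s e" using idem[OF EI] cl e by blast
    then show "dot s e * s = dot s e * s * e" using I[OF e, of "dot s e" s] by simp
  qed
  have M4: "\<forall>e\<in>E. \<forall>s t. dot (s * t) e = dot s (dot t e)"
  proof (intro ballI allI)
    fix e s t assume e: "e \<in> E"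
    have te: "dot t e \<in> E" using cl e by blast
    have key: "\<And>x. x * dot (s*t) e = x \<longleftrightarrow> x * dot s (dot t e) = x"
    proof -
      fix x
      have "x * dot (s*t) e = x \<longleftrightarrow> x * (s*t) * e = x * (s*t)" using I[OF e] by simp
      also have "\<dots> \<longleftrightarrow> (x * s) * t * e = (x*s) * t" by (simp add: mult.assoc)
      also have "\<dots> \<longleftrightarrow> x * s * dot t e = x * s" using I[OF e] by simp
      also have "\<dots> \<longleftrightarrow> x * dot s (dot t e) = x" using I[OF te] by simp
      finally show "?thesis x" .
    qed
    let ?a = "dot (s*t) e" and ?b = "dot s (dot t e)"
    have aE: "?a \<in> E" and bE: "?b \<in> E" using cl e te by blast+
    have "?a * ?a = ?a" "?b * ?b = ?b" using idem[OF EI] aE bE by auto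
    then have "?a = ?a * ?b" "?b = ?b * ?a" using key[of ?a] key[of ?b] by auto
    then show "?a = ?b" using rp aE bE unfolding right_pre_reduced_def by blast
  qed
  show "right_pre_reduced E \<and> (\<forall>e\<in>E. dot e e = 1) \<and> (\<forall>s. dot s 1 = 1) \<and>
        (\<forall>e\<in>E. \<forall>s. dot s e * s = dot s e * s * e) \<and>
        (\<forall>e\<in>E. \<forall>s t. dot (s * t) e = dot s (dot t e))"
    using rp M1 M2 M3 M4 by blast
next
  assume h: "right_pre_reduced E \<and> (\<forall>e\<in>E. dot e e = 1) \<and> (\<forall>s. dot s 1 = 1) \<and>
        (\<forall>e\<in>E. \<forall>s. dot s e * s = dot s e * s * e) \<and>
        (\<forall>e\<in>E. \<forall>s t. dot (s * t) e = dot s (dot t e))"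
  then have rp: "right_pre_reduced E" and M1: "\<And>e. e\<in>E \<Longrightarrow> dot e e = 1"
    and M2: "\<And>s. dot s 1 = 1"
    and M3: "\<And>e s. e\<in>E \<Longrightarrow> dot s e * s = dot s e * s * e"
    and M4: "\<And>e s t. e\<in>E \<Longrightarrow> dot (s * t) e = dot s (dot t e)" by auto
  have I: "\<And>t e s. e \<in> E \<Longrightarrow> s * t * e = s * t \<longleftrightarrow> s * dot t e = s"
  proof
    fix t e s assume e: "e \<in> E"
    assume "s * t * e = s * t"
    then have "dot (s*t) e = dot (s*t*e) e" by simp
    also have "\<dots> = dot (s*t) (dot e e)" using M4 e by simp
    also have "\<dots> = 1" using M1 M2 e by simp
    finally have "dot s (dot t e) = 1" using M4 e by simp
    then have "s = s * dot t e" using M3[of "dot t e" s] cl e by simp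
    then show "s * dot t e = s" by simp
  next
    fix t e s assume e: "e \<in> E"
    assume a: "s * dot t e = s"
    have "s * t * e = s * dot t e * t * e" using a by simp
    also have "\<dots> = s * (dot t e * t * e)" by (simp add: mult.assoc)
    also have "\<dots> = s * (dot t e * t)" using M3 e by simp
    also have "\<dots> = s * dot t e * t" by (simp add: mult.assoc)
    also have "\<dots> = s * t" using a by simp
    finally show "s * t * e = s * t" .
  qed
  show "modal_left_monoid E dot"
    unfolding modal_left_monoid_def using E1 EI rp cl I by blast
qed

lemma meet_is_meet:
  assumes ms: "meet_semilattice E" and e: "e \<in> E" and f: "f \<in> E"
  shows "is_meet E e f (meet E e f)"
proof -
  obtain g where g: "is_meet E e f g" using ms e f unfolding meet_semilattice_def by blast
  have u: "\<And>h. is_meet E e f h \<Longrightarrow> h = g"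
  proof -
    fix h assume h: "is_meet E e f h"
    then have "le_r h g" "le_r g h" using g unfolding is_meet_def by auto
    moreover have "h \<in> E" "g \<in> E" using g h unfolding is_meet_def by auto
    ultimately show "h = g" using ms unfolding meet_semilattice_def by blast
  qed
  show ?thesis unfolding meet_def using theI[of "is_meet E e f", OF g u] .
qed

lemma meet_unique:
  assumes ms: "meet_semilattice E" and e: "e \<in> E" and f: "f \<in> E" and g: "is_meet E e f g"
  shows "meet E e f = g"
proof -
  have m: "is_meet E e f (meet E e f)" using meet_is_meet[OF ms e f] .
  then have "le_r (meet E e f) g" "le_r g (meet E e f)" using g unfolding is_meet_def by auto
  moreover have "meet E e f \<in> E" "g \<in> E" using g m unfolding is_meet_def by auto
  ultimately show ?thesis using ms unfolding meet_semilattice_def by blast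
qed

lemma rpr_of_ms: "meet_semilattice E \<Longrightarrow> right_pre_reduced E"
  unfolding meet_semilattice_def right_pre_reduced_def le_r_def by blast

lemma meet_char:
  fixes x :: "'a::monoid_mult"
  assumes ms: "meet_semilattice E" and e: "e \<in> E" and f: "f \<in> E"
    and I2: "\<forall>s. \<forall>e\<in>E. \<forall>f\<in>E. s * e = s \<and> s * f = s \<longrightarrow> s * meet E e f = s"
  shows "x * meet E e f = x \<longleftrightarrow> x * e = x \<and> x * f = x"
proof
  have m: "is_meet E e f (meet E e f)" using meet_is_meet[OF ms e f] .
  then have ge: "meet E e f = meet E e f * e" and gf: "meet E e f = meet E e f * f"
    unfolding is_meet_def le_r_def by auto
  assume a: "x * meet E e f = x"
  have "x * e = x * meet E e f * e" using a by simp
  also have "\<dots> = x * (meet E e f * e)" by (simp add: mult.assoc)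
  also have "\<dots> = x" using ge a by simp
  finally have 1: "x * e = x" .
  have "x * f = x * meet E e f * f" using a by simp
  also have "\<dots> = x * (meet E e f * f)" by (simp add: mult.assoc)
  also have "\<dots> = x" using gf a by simp
  finally show "x * e = x \<and> x * f = x" using 1 by simp
next
  assume "x * e = x \<and> x * f = x"
  then show "x * meet E e f = x" using I2 e f by blast
qed

theorem proposition5p4:
  fixes E :: "'a::monoid_mult set" and dot :: "'a \<Rightarrow> 'a \<Rightarrow> 'a"
  assumes "1 \<in> E" and "E \<subseteq> idempotents"
    and "\<forall>t. \<forall>e\<in>E. dot t e \<in> E"
  shows "(modal_left_monoid E dot \<longleftrightarrow>
           right_pre_reduced E \<and>
           (\<forall>e\<in>E. dot e e = 1) \<and>
           (\<forall>s. dot s 1 = 1) \<and>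
           (\<forall>e\<in>E. \<forall>s. dot s e * s = dot s e * s * e) \<and>
           (\<forall>e\<in>E. \<forall>s t. dot (s * t) e = dot s (dot t e)))
       \<and> (inductive_left_monoid E dot \<longleftrightarrow>
           (\<forall>e\<in>E. dot e e = 1) \<and>
           (\<forall>s. dot s 1 = 1) \<and>
           (\<forall>e\<in>E. \<forall>s. dot s e * s = dot s e * s * e) \<and>
           (\<forall>e\<in>E. \<forall>s t. dot (s * t) e = dot s (dot t e)) \<and>
           meet_semilattice E \<and>
           (\<forall>s. \<forall>e\<in>E. \<forall>f\<in>E. dot s (meet E e f) = meet E (dot s e) (dot s f)))"
    (is "?A \<and> ?B")
proof
  note MI = modal_iff[OF assms]
  show ?A by (rule MI)
  note cl = assms(3)
  show ?B
  proof
    assume ind: "inductive_left_monoid E dot"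
    then have m: "modal_left_monoid E dot" and ms: "meet_semilattice E"
      and I2: "\<forall>s. \<forall>e\<in>E. \<forall>f\<in>E. s * e = s \<and> s * f = s \<longrightarrow> s * meet E e f = s"
      unfolding inductive_left_monoid_def by auto
    have I: "\<And>t e s. e \<in> E \<Longrightarrow> s * t * e = s * t \<longleftrightarrow> s * dot t e = s"
      using m unfolding modal_left_monoid_def by auto
    have rp: "right_pre_reduced E" using rpr_of_ms[OF ms] .
    have M5: "\<forall>s. \<forall>e\<in>E. \<forall>f\<in>E. dot s (meet E e f) = meet E (dot s e) (dot s f)"
    proof (intro allI ballI)
      fix s e f assume e: "e \<in> E" and f: "f \<in> E"
      have gE: "meet E e f \<in> E" using meet_is_meet[OF ms e f] unfolding is_meet_def by auto
      have se: "dot s e \<in> E" and sf: "dot s f \<in> E" using cl e f by auto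
      have hE: "meet E (dot s e) (dot s f) \<in> E"
        using meet_is_meet[OF ms se sf] unfolding is_meet_def by auto
      have aE: "dot s (meet E e f) \<in> E" using cl gE by auto
      have key: "\<And>x. x * dot s (meet E e f) = x \<longleftrightarrow> x * meet E (dot s e) (dot s f) = x"
      proof -
        fix x
        have "x * dot s (meet E e f) = x \<longleftrightarrow> (x * s) * meet E e f = x * s"
          using I[OF gE] by simp
        also have "\<dots> \<longleftrightarrow> (x*s) * e = x*s \<and> (x*s) * f = x*s"
          using meet_char[OF ms e f I2] by simp
        also have "\<dots> \<longleftrightarrow> x * dot s e = x \<and> x * dot s f = x"
          using I[OF e] I[OF f] by simp
        also have "\<dots> \<longleftrightarrow> x * meet E (dot s e) (dot s f) = x"
          using meet_char[OF ms se sf I2] by simp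
        finally show "?thesis x" .
      qed
      let ?a = "dot s (meet E e f)" and ?b = "meet E (dot s e) (dot s f)"
      have "?a * ?a = ?a" "?b * ?b = ?b" using idem[OF assms(2)] aE hE by auto
      then have "?a = ?a * ?b" "?b = ?b * ?a" using key[of ?a] key[of ?b] by auto
      then show "?a = ?b" using rp aE hE unfolding right_pre_reduced_def by blast
    qed
    show "(\<forall>e\<in>E. dot e e = 1) \<and> (\<forall>s. dot s 1 = 1) \<and>
           (\<forall>e\<in>E. \<forall>s. dot s e * s = dot s e * s * e) \<and>
           (\<forall>e\<in>E. \<forall>s t. dot (s * t) e = dot s (dot t e)) \<and>
           meet_semilattice E \<and>
           (\<forall>s. \<forall>e\<in>E. \<forall>f\<in>E. dot s (meet E e f) = meet E (dot s e) (dot s f))"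
      using MI m ms M5 by blast
  next
    assume h: "(\<forall>e\<in>E. dot e e = 1) \<and> (\<forall>s. dot s 1 = 1) \<and>
           (\<forall>e\<in>E. \<forall>s. dot s e * s = dot s e * s * e) \<and>
           (\<forall>e\<in>E. \<forall>s t. dot (s * t) e = dot s (dot t e)) \<and>
           meet_semilattice E \<and>
           (\<forall>s. \<forall>e\<in>E. \<forall>f\<in>E. dot s (meet E e f) = meet E (dot s e) (dot s f))"
    then have ms: "meet_semilattice E"
      and M5: "\<And>s e f. e\<in>E \<Longrightarrow> f\<in>E \<Longrightarrow> dot s (meet E e f) = meet E (dot s e) (dot s f)"
      by auto
    have m: "modal_left_monoid E dot" using MI h rpr_of_ms[OF ms] by blast
    have I: "\<And>t e s. e \<in> E \<Longrightarrow> s * t * e = s * t \<longleftrightarrow> s * dot t e = s"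
      using m unfolding modal_left_monoid_def by auto
    have m11: "meet E 1 1 = 1"
    proof (rule meet_unique[OF ms assms(1) assms(1)])
      show "is_meet E 1 1 1" unfolding is_meet_def le_r_def using assms(1)
        by (auto simp: le_r_def)
    qed
    have I2: "\<forall>s. \<forall>e\<in>E. \<forall>f\<in>E. s * e = s \<and> s * f = s \<longrightarrow> s * meet E e f = s"
    proof (intro allI ballI impI)
      fix s e f assume e: "e \<in> E" and f: "f \<in> E" and a: "s * e = s \<and> s * f = s"
      have gE: "meet E e f \<in> E" using meet_is_meet[OF ms e f] unfolding is_meet_def by auto
      have "1 * s * e = 1 * s \<longleftrightarrow> 1 * dot s e = 1" using I[OF e] by blast
      then have "dot s e = 1" using a by simp
      moreover have "1 * s * f = 1 * s \<longleftrightarrow> 1 * dot s f = 1" using I[OF f] by blast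
      then have "dot s f = 1" using a by simp
      ultimately have "dot s (meet E e f) = 1" using M5[OF e f] m11 by simp
      moreover have "1 * s * meet E e f = 1 * s \<longleftrightarrow> 1 * dot s (meet E e f) = 1" using I[OF gE] by blast
      ultimately show "s * meet E e f = s" by simp
    qed
    show "inductive_left_monoid E dot" unfolding inductive_left_monoid_def using m ms I2 by blast
  qed
qed

end
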